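(* In the setting below, $$\mathrm{Syl}_B(J)\cdot\begin{pmatrix}\mathfrak{M}_B(\mathbf{y})\\ \mathfrak{R}_B(\mathbf{y})\end{pmatrix}=[\mathrm{Tr}(b_ib_j)]_{i,j=1}^N.$$
   Context: Setting: $\mathbb{K}$ algebraically closed, $\mathbf{x}=(x_1,\ldots,x_m)$, $f_1,\ldots,f_s\in\mathbb{K}[\mathbf{x}]$ of degrees $d_i$, $\mathcal{I}=\langle f_1,\ldots,f_s\rangle$, $\mathcal{A}=\mathbb{K}[\mathbf{x}]/\mathcal{I}$ finite dimensional of dimension $N$. $\mathbb{K}[\mathbf{x}]_k$ = polynomials of total degree $\le k$; $\langle f_1,\ldots,f_s\rangle_d:=\{\sum_i q_if_i:\deg q_i\le d-d_i\}$; $\mathrm{Mon}_\le(\Delta)$ = monomials of degree $\le\Delta$. $B=[b_1,\ldots,b_N]$ are monomials $b_i=\mathbf{x}^{\alpha_i}$ of degree $\le D$ whose classes form a basis of $\mathcal{A}$, and $\Delta\ge2D$ is such that their classes also form a basis of $\mathbb{K}[\mathbf{x}]_\Delta/(\langle f_1,\ldots,f_s\rangle_{\Delta+1}\cap\mathbb{K}[\mathbf{x}]_\Delta)$. $\mathrm{Mac}_\Delta(\mathbf{f})$ is a matrix whose rows are the coefficient vectors (w.r.t. $\mathrm{Mon}_\le(\Delta)$) of a basis of $\langle f_1,\ldots,f_s\rangle_{\Delta+1}\cap\mathbb{K}[\mathbf{x}]_\Delta$, with columns indexed by $\mathrm{Mon}_\le(\Delta)$, the monomials of $B$ first. Fix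 $\mathbf{y}=(y_\alpha)_{|\alpha|\le\Delta}$ with $\mathrm{Mac}_\Delta(\mathbf{f})\mathbf{y}=0$ such that the moment matrix $\mathfrak{M}_B(\mathbf{y})=[y_{\alpha_i+\alpha_j}]_{i,j=1}^N$ is invertible. $\mathfrak{R}_B(\mathbf{y})$ is the unique matrix with rows indexed by $\mathrm{Mon}_\le(\Delta)\setminus B$ and columns by $B$ such that $\mathrm{Mac}_\Delta(\mathbf{f})\cdot\binom{\mathfrak{M}_B(\mathbf{y})}{\mathfrak{R}_B(\mathbf{y})}=0$ (rows of the stacked matrix ordered as the columns of $\mathrm{Mac}_\Delta(\mathbf{f})$). Write $\mathfrak{M}_B(\mathbf{y})^{-1}=[c_{ij}]$, $b_i^*:=\sum_{j}c_{ji}b_j$, and let $J$ be the unique element of $\mathrm{span}(b_1,\ldots,b_N)$ congruent to $\sum_i b_ib_i^*$ modulo $\mathcal{I}$ (so $\deg J\le D$). $\mathrm{Syl}_B(J)$ is the $N\times|\mathrm{Mon}_\le(\Delta)|$ matrix whose $i$-th row is the coefficient vector of the polynomial $b_iJ$ (of degree $\le 2D\le\Delta$) with respect to $\mathrm{Mon}_\le(\Delta)$, columns ordered as in $\mathrm{Mac}_\Delta(\mathbf{f})$. $\mathrm{Tr}(h)$ is the trace of the multiplication map $g\mapsto hg$ on $\mathcal{A}$. *)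

theory Defs
  imports "HOL-Computational_Algebra.Polynomial" "HOL-Library.Poly_Mapping"
begin

text \<open>Multivariate polynomials over 'k in the variables indexed by the finite type 'v:
  monomials are finitely supported exponent vectors, polynomials are finitely supported
  coefficient functions on monomials (multiplication = convolution, from Poly_Mapping).\<close>

type_synonym 'v mon = "'v \<Rightarrow>\<^sub>0 nat"
type_synonym ('v, 'k) mpoly = "'v mon \<Rightarrow>\<^sub>0 'k"

definition alg_closed_field :: "'k::field itself \<Rightarrow> bool" where
  "alg_closed_field _ \<longleftrightarrow> (\<forall>p :: 'k poly. degree p > 0 \<longrightarrow> (\<exists>x. poly p x = 0))"

definition mdeg :: "'v mon \<Rightarrow> nat" where
  "mdeg \<alpha> = (\<Sum>v\<in>Poly_Mapping.keys \<alpha>. Poly_Mapping.lookup \<alpha> v)"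

definition tdeg :: "('v, 'k::zero) mpoly \<Rightarrow> nat" where
  "tdeg p = Max (insert 0 (mdeg ` Poly_Mapping.keys p))"

definition mconst :: "'k::zero \<Rightarrow> ('v, 'k) mpoly" where
  "mconst c = Poly_Mapping.single 0 c"

definition mmono :: "'v mon \<Rightarrow> ('v, 'k::{zero,one}) mpoly" where
  "mmono \<alpha> = Poly_Mapping.single \<alpha> 1"

definition MonLe :: "nat \<Rightarrow> 'v mon set" where
  "MonLe \<Delta> = {\<alpha>. mdeg \<alpha> \<le> \<Delta>}"

definition ideal_gen :: "('v, 'k::field) mpoly list \<Rightarrow> ('v, 'k) mpoly set" where
  "ideal_gen fs = {p. \<exists>q. p = (\<Sum>i<length fs. q i * fs ! i)}"

definition ideal_deg :: "('v, 'k::field) mpoly list \<Rightarrow> nat \<Rightarrow> ('v, 'k) mpoly set" where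
  "ideal_deg fs d = {p. \<exists>q. (\<forall>i<length fs. q i = 0 \<or> tdeg (q i) + tdeg (fs ! i) \<le> d)
       \<and> p = (\<Sum>i<length fs. q i * fs ! i)}"

definition quot_basis :: "('v, 'k::field) mpoly list \<Rightarrow> ('v, 'k) mpoly list \<Rightarrow> bool" where
  "quot_basis fs bs \<longleftrightarrow>
     (\<forall>c. (\<Sum>i<length bs. mconst (c i) * bs ! i) \<in> ideal_gen fs \<longrightarrow> (\<forall>i<length bs. c i = 0))
   \<and> (\<forall>p. \<exists>c. p - (\<Sum>i<length bs. mconst (c i) * bs ! i) \<in> ideal_gen fs)"

definition quot_coord :: "('v, 'k::field) mpoly list \<Rightarrow> ('v, 'k) mpoly list \<Rightarrow> ('v, 'k) mpoly \<Rightarrow> nat \<Rightarrow> 'k" where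
  "quot_coord fs bs p = (THE c. (\<forall>i. length bs \<le> i \<longrightarrow> c i = 0)
       \<and> p - (\<Sum>i<length bs. mconst (c i) * bs ! i) \<in> ideal_gen fs)"

definition mult_trace :: "('v, 'k::field) mpoly list \<Rightarrow> ('v, 'k) mpoly \<Rightarrow> 'k" where
  "mult_trace fs h = (let bs = (SOME bs. quot_basis fs bs) in
      (\<Sum>k<length bs. quot_coord fs bs (h * bs ! k) k))"

end

theory Submission
  imports Defs
begin


lemma ideal_zero: "0 \<in> ideal_gen fs"
  unfolding ideal_gen_def by (rule CollectI, rule exI[of _ "\<lambda>_. 0"]) simp

lemma ideal_add: "p \<in> ideal_gen fs \<Longrightarrow> q \<in> ideal_gen fs \<Longrightarrow> p + q \<in> ideal_gen fs"
proof -
  assume "p \<in> ideal_gen fs" "q \<in> ideal_gen fs"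
  then obtain a b where "p = (\<Sum>i<length fs. a i * fs ! i)" "q = (\<Sum>i<length fs. b i * fs ! i)"
    unfolding ideal_gen_def by blast
  thus ?thesis unfolding ideal_gen_def
    by (auto intro!: exI[of _ "\<lambda>i. a i + b i"] simp: sum.distrib distrib_right)
qed

lemma ideal_mult: "p \<in> ideal_gen fs \<Longrightarrow> r * p \<in> ideal_gen fs"
proof -
  assume "p \<in> ideal_gen fs"
  then obtain a where "p = (\<Sum>i<length fs. a i * fs ! i)"
    unfolding ideal_gen_def by blast
  thus ?thesis unfolding ideal_gen_def
    by (auto intro!: exI[of _ "\<lambda>i. r * a i"] simp: sum_distrib_left mult.assoc)
qed

lemma ideal_uminus: "p \<in> ideal_gen fs \<Longrightarrow> - p \<in> ideal_gen fs"
  using ideal_mult[of p fs "-1"] by simp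

lemma ideal_diff: "p \<in> ideal_gen fs \<Longrightarrow> q \<in> ideal_gen fs \<Longrightarrow> p - q \<in> ideal_gen fs"
  using ideal_add[OF _ ideal_uminus] by (metis diff_conv_add_uminus)

lemma ideal_sum: "(\<And>k. k \<in> K \<Longrightarrow> p k \<in> ideal_gen fs) \<Longrightarrow> sum p K \<in> ideal_gen fs"
  by (induction K rule: infinite_finite_induct) (auto intro: ideal_zero ideal_add)

lemma mconst_add: "mconst (a + b) = mconst a + mconst b"
  unfolding mconst_def by (simp add: single_add)
lemma mconst_mult: "mconst (a * b) = (mconst a * mconst b :: ('v,'k::comm_semiring_1) mpoly)"
  unfolding mconst_def by (simp add: mult_single)
lemma mconst_0[simp]: "mconst 0 = 0" unfolding mconst_def by simp
lemma mconst_1[simp]: "mconst 1 = 1" unfolding mconst_def by simp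
lemma mconst_diff: "mconst (a - b) = (mconst a - mconst b :: ('v,'k::ab_group_add) mpoly)"
  unfolding mconst_def by (simp add: single_diff)
lemma mconst_sum: "mconst (sum f K) = sum (\<lambda>k. mconst (f k)) K"
  by (induction K rule: infinite_finite_induct) (auto simp: mconst_add)

lemma lookup_mconst_mult: "Poly_Mapping.lookup (mconst c * p) a = (c::'k::field) * Poly_Mapping.lookup p a"
  unfolding mconst_def mult_map_scale_conv_mult[symmetric]
  by (simp add: map.rep_eq when_def)

lemma mmono_mult: "mmono a * mmono b = (mmono (a + b) :: ('v,'k::comm_semiring_1) mpoly)"
  unfolding mmono_def by (simp add: mult_single)

lemma lookup_mmono: "Poly_Mapping.lookup (mmono a) b = (if a = b then 1 else 0)"
  unfolding mmono_def by (simp add: lookup_single)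

lemma mdeg_UNIV: "mdeg (a :: ('v::finite) mon) = (\<Sum>v\<in>UNIV. Poly_Mapping.lookup a v)"
  unfolding mdeg_def by (rule sum.mono_neutral_left) (auto simp: in_keys_iff)

lemma mdeg_add: "mdeg (a + b :: ('v::finite) mon) = mdeg a + mdeg b"
  by (simp add: mdeg_UNIV lookup_add sum.distrib)

lemma lookup_le_mdeg: "Poly_Mapping.lookup a v \<le> mdeg (a :: ('v::finite) mon)"
  unfolding mdeg_UNIV by (rule member_le_sum) auto

lemma finite_MonLe: "finite (MonLe d :: ('v::finite) mon set)"
proof -
  have "Poly_Mapping.lookup ` (MonLe d :: 'v mon set) \<subseteq> {f. \<forall>x. (x \<in> UNIV \<longrightarrow> f x \<in> {..d}) \<and> (x \<notin> UNIV \<longrightarrow> f x = 0)}"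
  proof
    fix f :: "'v \<Rightarrow> nat" assume "f \<in> Poly_Mapping.lookup ` (MonLe d :: 'v mon set)"
    then obtain a where "f = Poly_Mapping.lookup a" "mdeg a \<le> d" by (auto simp: MonLe_def)
    thus "f \<in> {f. \<forall>x. (x \<in> UNIV \<longrightarrow> f x \<in> {..d}) \<and> (x \<notin> UNIV \<longrightarrow> f x = 0)}"
      using lookup_le_mdeg[of a] by (auto intro: order_trans)
  qed
  hence "finite (Poly_Mapping.lookup ` (MonLe d :: 'v mon set))"
    by (rule finite_subset) (use finite_set_of_finite_funs[of "UNIV::'v set" "{..d}" 0] in simp)
  moreover have "inj_on Poly_Mapping.lookup (MonLe d :: 'v mon set)"
    by (rule inj_onI) (rule poly_mapping_eqI, simp)
  ultimately show ?thesis by (rule finite_imageD)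
qed

lemma tdeg_le: "tdeg p \<le> d \<longleftrightarrow> (\<forall>a. Poly_Mapping.lookup p a \<noteq> 0 \<longrightarrow> mdeg a \<le> d)"
  unfolding tdeg_def by (auto simp: in_keys_iff)



lemma sum_mconst_diff:
  "(\<Sum>i<n. mconst (a i) * bs ! i) - (\<Sum>i<n. mconst (b i) * bs ! i)
   = (\<Sum>i<n. mconst (a i - b i) * (bs ! i :: ('v,'k::field) mpoly))"
  by (simp add: sum_subtractf[symmetric] mconst_diff left_diff_distrib)

lemma coord_uniq:
  assumes qb: "quot_basis fs bs"
    and h1: "p - (\<Sum>i<length bs. mconst (c1 i) * bs ! i) \<in> ideal_gen fs"
    and h2: "p - (\<Sum>i<length bs. mconst (c2 i) * bs ! i) \<in> ideal_gen fs"
    and i: "i < length bs"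
  shows "c1 i = c2 i"
proof -
  have "(p - (\<Sum>i<length bs. mconst (c2 i) * bs ! i)) - (p - (\<Sum>i<length bs. mconst (c1 i) * bs ! i))
     \<in> ideal_gen fs" using h1 h2 by (rule ideal_diff[rotated])
  hence dd: "(\<Sum>i<length bs. mconst (c1 i - c2 i) * bs ! i) \<in> ideal_gen fs"
    by (simp add: sum_mconst_diff[symmetric])
  from qb have "\<forall>c. (\<Sum>i<length bs. mconst (c i) * bs ! i) \<in> ideal_gen fs \<longrightarrow> (\<forall>i<length bs. c i = 0)"
    unfolding quot_basis_def by blast
  from this[rule_format, of "\<lambda>i. c1 i - c2 i"] dd i have "c1 i - c2 i = 0" by blast
  thus ?thesis by simp
qed

lemma coord_spec:
  assumes qb: "quot_basis fs bs"
  shows "(\<forall>i. length bs \<le> i \<longrightarrow> quot_coord fs bs p i = 0)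
    \<and> p - (\<Sum>i<length bs. mconst (quot_coord fs bs p i) * bs ! i) \<in> ideal_gen fs"
proof -
  obtain c where c: "p - (\<Sum>i<length bs. mconst (c i) * bs ! i) \<in> ideal_gen fs"
    using qb unfolding quot_basis_def by blast
  let ?c = "\<lambda>i. if i < length bs then c i else 0"
  have e: "(\<Sum>i<length bs. mconst (?c i) * bs ! i) = (\<Sum>i<length bs. mconst (c i) * bs ! i)"
    by (rule sum.cong) auto
  have "\<exists>!c. (\<forall>i. length bs \<le> i \<longrightarrow> c i = 0)
       \<and> p - (\<Sum>i<length bs. mconst (c i) * bs ! i) \<in> ideal_gen fs"
  proof (rule ex1I[of _ ?c])
    show "(\<forall>i. length bs \<le> i \<longrightarrow> ?c i = 0)
       \<and> p - (\<Sum>i<length bs. mconst (?c i) * bs ! i) \<in> ideal_gen fs" using c e by auto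
  next
    fix d assume d: "(\<forall>i. length bs \<le> i \<longrightarrow> d i = 0)
       \<and> p - (\<Sum>i<length bs. mconst (d i) * bs ! i) \<in> ideal_gen fs"
    show "d = ?c"
    proof
      fix i show "d i = ?c i"
      proof (cases "i < length bs")
        case True
        with coord_uniq[OF qb _ c True, of d] d show ?thesis by simp
      next
        case False with d show ?thesis by simp
      qed
    qed
  qed
  thus ?thesis unfolding quot_coord_def by (rule theI')
qed

lemma coord_char:
  assumes qb: "quot_basis fs bs"
    and h: "p - (\<Sum>i<length bs. mconst (c i) * bs ! i) \<in> ideal_gen fs"
    and i: "i < length bs"
  shows "quot_coord fs bs p i = c i"
  using coord_uniq[OF qb conjunct2[OF coord_spec[OF qb]] h i] .

lemma coord_cong:
  assumes qb: "quot_basis fs bs" and h: "p - q \<in> ideal_gen fs" and i: "i < length bs"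
  shows "quot_coord fs bs p i = quot_coord fs bs q i"
proof (rule coord_char[OF qb _ i])
  have "(p - q) + (q - (\<Sum>i<length bs. mconst (quot_coord fs bs q i) * bs ! i)) \<in> ideal_gen fs"
    using h conjunct2[OF coord_spec[OF qb]] by (rule ideal_add)
  thus "p - (\<Sum>i<length bs. mconst (quot_coord fs bs q i) * bs ! i) \<in> ideal_gen fs" by simp
qed

lemma coord_lin:
  assumes qb: "quot_basis fs bs" and K: "finite K" and i: "i < length bs"
  shows "quot_coord fs bs (\<Sum>k\<in>K. mconst (a k) * p k) i = (\<Sum>k\<in>K. a k * quot_coord fs bs (p k) i)"
proof (rule coord_char[OF qb _ i])
  let ?n = "length bs"
  let ?q = "\<lambda>k. p k - (\<Sum>i<?n. mconst (quot_coord fs bs (p k) i) * bs ! i)"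
  have "(\<Sum>k\<in>K. mconst (a k) * ?q k) \<in> ideal_gen fs"
    by (rule ideal_sum, rule ideal_mult, rule conjunct2[OF coord_spec[OF qb]])
  moreover have "(\<Sum>k\<in>K. mconst (a k) * ?q k) = (\<Sum>k\<in>K. mconst (a k) * p k)
     - (\<Sum>i<?n. mconst (\<Sum>k\<in>K. a k * quot_coord fs bs (p k) i) * bs ! i)"
    by (simp add: right_diff_distrib sum_subtractf sum_distrib_left mconst_sum mconst_mult
        sum_distrib_right mult.assoc sum.swap[of _ K])
  ultimately show "(\<Sum>k\<in>K. mconst (a k) * p k)
     - (\<Sum>i<?n. mconst (\<Sum>k\<in>K. a k * quot_coord fs bs (p k) i) * bs ! i) \<in> ideal_gen fs" by simp
qed

lemma coord_sum:
  assumes qb: "quot_basis fs bs" and K: "finite K" and i: "i < length bs"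
  shows "quot_coord fs bs (\<Sum>k\<in>K. p k) i = (\<Sum>k\<in>K. quot_coord fs bs (p k) i)"
  using coord_lin[OF qb K i, of "\<lambda>_. 1" p] by simp

lemma coord_scale:
  assumes qb: "quot_basis fs bs" and i: "i < length bs"
  shows "quot_coord fs bs (mconst a * p) i = a * quot_coord fs bs p i"
  using coord_lin[OF qb _ i, of "{0::nat}" "\<lambda>_. a" "\<lambda>_. p"] by simp

lemma trace_indep:
  assumes qb: "quot_basis fs bs" and qb': "quot_basis fs bs'"
  shows "(\<Sum>k<length bs'. quot_coord fs bs' (h * bs' ! k) k)
       = (\<Sum>l<length bs. quot_coord fs bs (h * bs ! l) l)"
proof -
  let ?c = "quot_coord fs bs" and ?c' = "quot_coord fs bs'"
  have "?c' (h * bs' ! k) k = (\<Sum>l<length bs. ?c (bs' ! k) l * ?c' (h * bs ! l) k)"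
    if k: "k < length bs'" for k
  proof -
    have "h * bs' ! k - (\<Sum>l<length bs. mconst (?c (bs' ! k) l) * (h * bs ! l)) \<in> ideal_gen fs"
      using ideal_mult[OF conjunct2[OF coord_spec[OF qb, of "bs' ! k"]], of h]
      by (simp add: right_diff_distrib sum_distrib_left mult.left_commute)
    hence "?c' (h * bs' ! k) k = ?c' (\<Sum>l<length bs. mconst (?c (bs' ! k) l) * (h * bs ! l)) k"
      by (rule coord_cong[OF qb' _ k])
    thus ?thesis by (simp add: coord_lin[OF qb' _ k])
  qed
  hence "(\<Sum>k<length bs'. ?c' (h * bs' ! k) k)
     = (\<Sum>k<length bs'. \<Sum>l<length bs. ?c (bs' ! k) l * ?c' (h * bs ! l) k)" by simp
  also have "\<dots> = (\<Sum>l<length bs. \<Sum>k<length bs'. ?c' (h * bs ! l) k * ?c (bs' ! k) l)"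
    by (subst sum.swap) (simp add: mult.commute)
  also have "\<dots> = (\<Sum>l<length bs. ?c (h * bs ! l) l)"
  proof (rule sum.cong[OF refl])
    fix l assume l: "l \<in> {..<length bs}"
    have "?c (\<Sum>k<length bs'. mconst (?c' (h * bs ! l) k) * bs' ! k) l = ?c (h * bs ! l) l"
    proof (rule coord_cong[OF qb _ ])
      show "(\<Sum>k<length bs'. mconst (?c' (h * bs ! l) k) * bs' ! k) - h * bs ! l \<in> ideal_gen fs"
        using ideal_uminus[OF conjunct2[OF coord_spec[OF qb', of "h * bs ! l"]]] by simp
    qed (use l in auto)
    thus "(\<Sum>k<length bs'. ?c' (h * bs ! l) k * ?c (bs' ! k) l) = ?c (h * bs ! l) l"
      using coord_lin[OF qb, where i=l and K="{..<length bs'}"] l by simp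
  qed
  finally show ?thesis .
qed



theorem theorem3p3:
  fixes fs :: "('v::finite, 'k::field) mpoly list"
    and B :: "'v mon list"
    and D \<Delta> :: nat
    and rows :: "('v, 'k) mpoly list"
    and y :: "'v mon \<Rightarrow> 'k"
    and Minv :: "nat \<Rightarrow> nat \<Rightarrow> 'k"
    and R :: "'v mon \<Rightarrow> nat \<Rightarrow> 'k"
    and J :: "('v, 'k) mpoly"
  defines "N \<equiv> length B"
    and "V \<equiv> ideal_deg fs (\<Delta> + 1) \<inter> {p. tdeg p \<le> \<Delta>}"
  assumes alg_closed: "alg_closed_field TYPE('k)"
    and B_basis: "quot_basis fs (map mmono B)"
    and B_deg: "\<forall>i<N. mdeg (B ! i) \<le> D"
    and Delta_ge: "2 * D \<le> \<Delta>"
    and B_trunc_indep: "\<forall>c. (\<Sum>i<N. mconst (c i) * mmono (B ! i)) \<in> V \<longrightarrow> (\<forall>i<N. c i = 0)"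
    and B_trunc_span: "\<forall>p. tdeg p \<le> \<Delta> \<longrightarrow> (\<exists>c. p - (\<Sum>i<N. mconst (c i) * mmono (B ! i)) \<in> V)"
    and rows_in: "set rows \<subseteq> V"
    and rows_indep: "\<forall>a. (\<Sum>i<length rows. mconst (a i) * rows ! i) = 0 \<longrightarrow> (\<forall>i<length rows. a i = 0)"
    and rows_span: "\<forall>p\<in>V. \<exists>a. p = (\<Sum>i<length rows. mconst (a i) * rows ! i)"
    and Mac_y: "\<forall>r\<in>set rows. (\<Sum>\<alpha>\<in>MonLe \<Delta>. Poly_Mapping.lookup r \<alpha> * y \<alpha>) = 0"
    and Minv_right: "\<forall>i<N. \<forall>j<N. (\<Sum>k<N. y (B ! i + B ! k) * Minv k j) = (if i = j then 1 else 0)"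
    and Minv_left: "\<forall>i<N. \<forall>j<N. (\<Sum>k<N. Minv i k * y (B ! k + B ! j)) = (if i = j then 1 else 0)"
    and R_def: "\<forall>j<N. \<forall>r\<in>set rows. (\<Sum>\<alpha>\<in>MonLe \<Delta>. Poly_Mapping.lookup r \<alpha> *
                  (if \<alpha> \<in> set B then y (\<alpha> + B ! j) else R \<alpha> j)) = 0"
    and J_span: "\<exists>e. J = (\<Sum>i<N. mconst (e i) * mmono (B ! i))"
    and J_cong: "J - (\<Sum>i<N. mmono (B ! i) * (\<Sum>j<N. mconst (Minv j i) * mmono (B ! j))) \<in> ideal_gen fs"
  shows "\<forall>i<N. \<forall>j<N.
           (\<Sum>\<alpha>\<in>MonLe \<Delta>. Poly_Mapping.lookup (mmono (B ! i) * J) \<alpha> *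
               (if \<alpha> \<in> set B then y (\<alpha> + B ! j) else R \<alpha> j))
           = mult_trace fs (mmono (B ! i) * mmono (B ! j))"
proof (intro allI impI)
  fix i j assume i: "i < N" and j: "j < N"
  define bs :: "('v,'k) mpoly list" where "bs = map mmono B"
  have qb: "quot_basis fs bs" using B_basis bs_def by simp
  have lbs: "length bs = N" by (simp add: bs_def N_def)
  have bsk: "k < N \<Longrightarrow> bs ! k = mmono (B ! k)" for k by (simp add: bs_def N_def)
  have sbs: "(\<Sum>k<length bs. mconst (c k) * bs ! k) = (\<Sum>k<N. mconst (c k) * mmono (B ! k))" for c
    by (simp add: lbs bsk)
  define co :: "('v,'k) mpoly \<Rightarrow> nat \<Rightarrow> 'k" where "co p k = quot_coord fs bs p k" for p k
  have VI: "V \<subseteq> ideal_gen fs" unfolding V_def ideal_deg_def ideal_gen_def by blast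
  have BM: "k < N \<Longrightarrow> B ! k \<in> MonLe \<Delta>" for k using B_deg Delta_ge by (force simp: MonLe_def)
  have BB: "k < N \<Longrightarrow> m < N \<Longrightarrow> B ! k + B ! m \<in> MonLe \<Delta>" for k m
  proof -
    assume "k < N" "m < N"
    hence "mdeg (B ! k) \<le> D" "mdeg (B ! m) \<le> D" using B_deg by auto
    thus ?thesis using Delta_ge by (simp add: MonLe_def mdeg_add)
  qed
  have fin: "finite (MonLe \<Delta> :: 'v mon set)" by (rule finite_MonLe)
  define F :: "('v mon \<Rightarrow> 'k) \<Rightarrow> ('v,'k) mpoly \<Rightarrow> 'k" where "F w p = (\<Sum>\<alpha>\<in>MonLe \<Delta>. Poly_Mapping.lookup p \<alpha> * w \<alpha>)" for w p
  have F_lin: "F w (\<Sum>k\<in>K. mconst (a k) * q k) = (\<Sum>k\<in>K. a k * F w (q k))" for w K a q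
    unfolding F_def by (simp add: lookup_sum lookup_mconst_mult sum_distrib_right sum_distrib_left
       mult.assoc sum.swap[of _ K])
  have F_diff: "F w (p - q) = F w p - F w q" for w p q
    unfolding F_def by (simp add: lookup_minus left_diff_distrib sum_subtractf)
  have F_mono: "F w (mmono a) = w a" if "a \<in> MonLe \<Delta>" for w a
  proof -
    have "F w (mmono a) = (\<Sum>\<alpha>\<in>MonLe \<Delta>. if a = \<alpha> then w \<alpha> else 0)"
      unfolding F_def lookup_mmono by (rule sum.cong) auto
    thus ?thesis using fin that by simp
  qed
  have FA: "F w p = (\<Sum>k<N. co p k * w (B ! k))"
    if wr: "\<forall>r\<in>set rows. F w r = 0" and dp: "tdeg p \<le> \<Delta>" for w p
  proof -
    obtain c where c: "p - (\<Sum>k<N. mconst (c k) * mmono (B ! k)) \<in> V"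
      using B_trunc_span dp by blast
    then obtain a where a: "p - (\<Sum>k<N. mconst (c k) * mmono (B ! k))
        = (\<Sum>i<length rows. mconst (a i) * rows ! i)" using rows_span by blast
    have "F w (p - (\<Sum>k<N. mconst (c k) * mmono (B ! k))) = 0"
      unfolding a F_lin using wr by simp
    hence "F w p = (\<Sum>k<N. c k * F w (mmono (B ! k)))" by (simp add: F_diff F_lin)
    also have "\<dots> = (\<Sum>k<N. c k * w (B ! k))" using BM F_mono by simp
    also have "\<dots> = (\<Sum>k<N. co p k * w (B ! k))"
    proof (rule sum.cong[OF refl])
      fix k assume "k \<in> {..<N}"
      hence "co p k = c k" unfolding co_def using coord_char[OF qb, of p c k] c VI sbs lbs by auto
      thus "c k * w (B ! k) = co p k * w (B ! k)" by simp
    qed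
    finally show ?thesis .
  qed
  define L :: "'v mon \<Rightarrow> 'k" where "L \<alpha> = (if \<alpha> \<in> set B then y (\<alpha> + B ! j) else R \<alpha> j)" for \<alpha>
  have LR: "\<forall>r\<in>set rows. F L r = 0" using R_def j unfolding F_def L_def by blast
  have YR: "\<forall>r\<in>set rows. F y r = 0" using Mac_y unfolding F_def by blast
  obtain e where e: "J = (\<Sum>l<N. mconst (e l) * mmono (B ! l))" using J_span by blast
  have bJ: "mmono (B ! i) * J = (\<Sum>l<N. mconst (e l) * mmono (B ! i + B ! l))"
    unfolding e by (simp add: sum_distrib_left mult.left_commute mmono_mult)
  have dJ: "tdeg (mmono (B ! i) * J) \<le> \<Delta>"
    unfolding tdeg_le
  proof (intro allI impI)
    fix \<alpha> assume nz: "Poly_Mapping.lookup (mmono (B ! i) * J) \<alpha> \<noteq> 0"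
    have "\<exists>l<N. B ! i + B ! l = \<alpha>"
    proof (rule ccontr)
      assume "\<not> ?thesis"
      hence "Poly_Mapping.lookup (mmono (B ! i) * J) \<alpha> = 0"
        unfolding bJ by (simp add: lookup_sum lookup_mconst_mult lookup_mmono)
      with nz show False by simp
    qed
    then obtain l where "l < N" "B ! i + B ! l = \<alpha>" by blast
    thus "mdeg \<alpha> \<le> \<Delta>" using BB[OF i] by (auto simp: MonLe_def)
  qed
  have dmm: "tdeg (mmono (B ! k + B ! m) :: ('v,'k) mpoly) \<le> \<Delta>" if "k < N" "m < N" for k m
    using BB[OF that] unfolding tdeg_le by (auto simp: lookup_mmono MonLe_def split: if_splits)
  define Lam :: "('v,'k) mpoly \<Rightarrow> 'k" where "Lam p = (\<Sum>l<N. co p l * y (B ! l))" for p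
  have Lam_cong: "Lam p = Lam q" if "p - q \<in> ideal_gen fs" for p q
    unfolding Lam_def co_def using coord_cong[OF qb that] lbs by simp
  have Lam_lin: "Lam (\<Sum>k\<in>K. mconst (a k) * p k) = (\<Sum>k\<in>K. a k * Lam (p k))" if K: "finite K" for K a p
  proof -
    have "Lam (\<Sum>k\<in>K. mconst (a k) * p k) = (\<Sum>l<N. (\<Sum>k\<in>K. a k * co (p k) l) * y (B ! l))"
      unfolding Lam_def co_def using coord_lin[OF qb K] lbs by simp
    also have "\<dots> = (\<Sum>k\<in>K. a k * Lam (p k))"
      unfolding Lam_def by (simp add: sum_distrib_right sum_distrib_left mult.assoc sum.swap[of _ K])
    finally show ?thesis .
  qed
  have LamE: "Lam (r * q) = (\<Sum>k<N. co q k * Lam (r * mmono (B ! k)))" for r q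
  proof -
    have "r * (q - (\<Sum>k<N. mconst (co q k) * mmono (B ! k))) \<in> ideal_gen fs"
      using conjunct2[OF coord_spec[OF qb, of q]] unfolding sbs co_def by (rule ideal_mult)
    hence "r * q - (\<Sum>k<N. mconst (co q k) * (r * mmono (B ! k))) \<in> ideal_gen fs"
      by (simp add: right_diff_distrib sum_distrib_left mult.left_commute)
    hence "Lam (r * q) = Lam (\<Sum>k<N. mconst (co q k) * (r * mmono (B ! k)))" by (rule Lam_cong)
    thus ?thesis using Lam_lin[of "{..<N}" "\<lambda>k. co q k" "\<lambda>k. r * mmono (B ! k)"] by simp
  qed
  have Y1: "y (B ! k + B ! m) = Lam (mmono (B ! k) * mmono (B ! m))" if "k < N" "m < N" for k m
  proof -
    have "y (B ! k + B ! m) = F y (mmono (B ! k + B ! m))" using F_mono BB[OF that] by simp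
    also have "\<dots> = (\<Sum>l<N. co (mmono (B ! k + B ! m)) l * y (B ! l))"
      using FA[OF YR dmm[OF that]] .
    finally show ?thesis unfolding Lam_def by (simp add: mmono_mult)
  qed
  define g :: "('v,'k) mpoly" where "g = mmono (B ! i) * mmono (B ! j)"
  define bst :: "nat \<Rightarrow> ('v,'k) mpoly" where "bst l = (\<Sum>m<N. mconst (Minv m l) * mmono (B ! m))" for l
  have dual: "Lam (bst l * mmono (B ! k)) = (if k = l then 1 else 0)" if "k < N" "l < N" for k l
  proof -
    have "bst l * mmono (B ! k) = (\<Sum>m<N. mconst (Minv m l) * (mmono (B ! m) * mmono (B ! k)))"
      unfolding bst_def by (simp add: sum_distrib_right mult.assoc)
    hence "Lam (bst l * mmono (B ! k)) = (\<Sum>m<N. Minv m l * Lam (mmono (B ! m) * mmono (B ! k)))"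
      using Lam_lin[of "{..<N}" "\<lambda>m. Minv m l" "\<lambda>m. mmono (B ! m) * mmono (B ! k)"] by simp
    also have "\<dots> = (\<Sum>m<N. y (B ! k + B ! m) * Minv m l)"
      by (rule sum.cong[OF refl]) (use Y1 that in \<open>auto simp: add.commute mult.commute\<close>)
    also have "\<dots> = (if k = l then 1 else 0)" using Minv_right that by blast
    finally show ?thesis .
  qed
  have "(\<Sum>\<alpha>\<in>MonLe \<Delta>. Poly_Mapping.lookup (mmono (B ! i) * J) \<alpha> *
               (if \<alpha> \<in> set B then y (\<alpha> + B ! j) else R \<alpha> j)) = F L (mmono (B ! i) * J)"
    unfolding F_def L_def ..
  also have "\<dots> = (\<Sum>k<N. co (mmono (B ! i) * J) k * L (B ! k))" using FA[OF LR dJ] .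
  also have "\<dots> = (\<Sum>k<N. co (mmono (B ! i) * J) k * Lam (mmono (B ! j) * mmono (B ! k)))"
  proof (rule sum.cong[OF refl])
    fix k assume "k \<in> {..<N}"
    hence k: "k < N" by simp
    hence "B ! k \<in> set B" unfolding N_def by simp
    hence "L (B ! k) = y (B ! k + B ! j)" unfolding L_def by simp
    also have "\<dots> = Lam (mmono (B ! j) * mmono (B ! k))" using Y1[OF k j] by (simp add: mult.commute)
    finally show "co (mmono (B ! i) * J) k * L (B ! k) = co (mmono (B ! i) * J) k * Lam (mmono (B ! j) * mmono (B ! k))" by simp
  qed
  also have "\<dots> = Lam (mmono (B ! j) * (mmono (B ! i) * J))" by (rule LamE[symmetric])
  also have "\<dots> = Lam (J * g)" unfolding g_def by (simp add: ac_simps)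
  also have "\<dots> = Lam ((\<Sum>l<N. mmono (B ! l) * bst l) * g)"
  proof (rule Lam_cong)
    have "(J - (\<Sum>l<N. mmono (B ! l) * bst l)) * g \<in> ideal_gen fs"
      using ideal_mult[OF J_cong, of g] unfolding bst_def by (simp add: mult.commute)
    thus "J * g - (\<Sum>l<N. mmono (B ! l) * bst l) * g \<in> ideal_gen fs" by (simp add: left_diff_distrib)
  qed
  also have "\<dots> = (\<Sum>l<N. Lam (bst l * (g * mmono (B ! l))))"
  proof -
    have "(\<Sum>l<N. mmono (B ! l) * bst l) * g = (\<Sum>l<N. mconst 1 * (bst l * (g * mmono (B ! l))))"
      by (simp add: sum_distrib_right sum_distrib_left ac_simps)
    thus ?thesis using Lam_lin[of "{..<N}" "\<lambda>_. 1" "\<lambda>l. bst l * (g * mmono (B ! l))"] by simp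
  qed
  also have "\<dots> = (\<Sum>l<N. co (g * mmono (B ! l)) l)"
  proof (rule sum.cong[OF refl])
    fix l assume l: "l \<in> {..<N}"
    have "Lam (bst l * (g * mmono (B ! l))) = (\<Sum>k<N. co (g * mmono (B ! l)) k * (if k = l then 1 else 0))"
      unfolding LamE[of "bst l" "g * mmono (B ! l)"] using dual l by simp
    also have "\<dots> = co (g * mmono (B ! l)) l" using l by (simp add: if_distrib cong: if_cong)
    finally show "Lam (bst l * (g * mmono (B ! l))) = co (g * mmono (B ! l)) l" .
  qed
  also have "\<dots> = mult_trace fs g"
  proof -
    define bs' :: "('v,'k) mpoly list" where "bs' = (SOME bs. quot_basis fs bs)"
    have qb': "quot_basis fs bs'" unfolding bs'_def using qb by (rule someI)
    have "mult_trace fs g = (\<Sum>k<length bs'. quot_coord fs bs' (g * bs' ! k) k)"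
      unfolding mult_trace_def bs'_def Let_def ..
    also have "\<dots> = (\<Sum>l<length bs. quot_coord fs bs (g * bs ! l) l)" by (rule trace_indep[OF qb qb'])
    also have "\<dots> = (\<Sum>l<N. co (g * mmono (B ! l)) l)" unfolding co_def by (simp add: lbs bsk)
    finally show ?thesis ..
  qed
  finally show "(\<Sum>\<alpha>\<in>MonLe \<Delta>. Poly_Mapping.lookup (mmono (B ! i) * J) \<alpha> *
               (if \<alpha> \<in> set B then y (\<alpha> + B ! j) else R \<alpha> j))
           = mult_trace fs (mmono (B ! i) * mmono (B ! j))" unfolding g_def .
qed

end
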